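(* Suppose that $\phi\in\mathbb{Q}(x)$ has degree $2$, has a $2$-periodic critical point, and that $\operatorname{Aut}(\phi)$ is trivial. Then $\phi$ is linearly conjugate over $\mathbb{Q}$ to a map of the form $\phi_v=\dfrac{v(x-1)}{x^2}$ with $v\in\mathbb{Q}\setminus\{0\}$.
   Context: A point $P\in\mathbb{P}^1(\overline{\mathbb{Q}})$ is $2$-periodic if $\phi^2(P)=P\neq\phi(P)$; a critical point is a point where $\phi:\mathbb{P}^1\to\mathbb{P}^1$ ramifies. $\operatorname{Aut}(\phi)$ is the group of degree-one $\sigma\in\overline{\mathbb{Q}}(x)$ with $\sigma^{-1}\circ\phi\circ\sigma=\phi$. Linear conjugacy over $\mathbb{Q}$: $\psi=\sigma^{-1}\circ\phi\circ\sigma$ for some degree-one $\sigma\in\mathbb{Q}(x)$. *)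

theory Defs
  imports Complex_Main "HOL-Computational_Algebra.Computational_Algebra"
begin

text \<open>A rational function phi in Q(x) is represented by a pair (p, q) of polynomials
  over Q with phi = p/q; it is in lowest terms when p, q are coprime and q is nonzero.  The projective line P^1 over C is modelled by
  complex option, with None the point at infinity; P^1(Qbar) is the subset of points
  with algebraic coordinate.\<close>

type_synonym ratmap = "rat poly \<times> rat poly"

definition rm_deg :: "ratmap \<Rightarrow> nat" where
  "rm_deg phi = max (degree (fst phi)) (degree (snd phi))"

definition rm_valid :: "ratmap \<Rightarrow> bool" where
  "rm_valid phi \<longleftrightarrow> snd phi \<noteq> 0 \<and> coprime (fst phi) (snd phi)"

definition rm_num :: "ratmap \<Rightarrow> complex poly" where
  "rm_num phi = map_poly of_rat (fst phi)"

definition rm_den :: "ratmap \<Rightarrow> complex poly" where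
  "rm_den phi = map_poly of_rat (snd phi)"

definition rm_eval :: "ratmap \<Rightarrow> complex option \<Rightarrow> complex option" where
  "rm_eval phi x = (case x of
      Some z \<Rightarrow> (if poly (rm_den phi) z = 0 then None
                 else Some (poly (rm_num phi) z / poly (rm_den phi) z))
    | None \<Rightarrow> (if degree (fst phi) > degree (snd phi) then None
              else Some (coeff (rm_num phi) (rm_deg phi) / coeff (rm_den phi) (rm_deg phi))))"

text \<open>The (dehomogenised) form whose zeros are the preimages of a point w:
  p - w q for finite w, and q for w = infinity.\<close>
definition rm_fiber_poly :: "ratmap \<Rightarrow> complex option \<Rightarrow> complex poly" where
  "rm_fiber_poly phi w = (case w of
      Some a \<Rightarrow> rm_num phi - smult a (rm_den phi)
    | None \<Rightarrow> rm_den phi)"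

text \<open>Ramification index e_P(phi): multiplicity of P as a solution of phi(x) = phi(P)
  (order of vanishing at P of the homogeneous form b F - a G, where phi(P) = [a:b]).\<close>
definition ram_index :: "ratmap \<Rightarrow> complex option \<Rightarrow> nat" where
  "ram_index phi x = (let H = rm_fiber_poly phi (rm_eval phi x) in
     (case x of Some z \<Rightarrow> order z H | None \<Rightarrow> rm_deg phi - degree H))"

definition critical_pt :: "ratmap \<Rightarrow> complex option \<Rightarrow> bool" where
  "critical_pt phi x \<longleftrightarrow> ram_index phi x \<ge> 2"

definition alg_pt :: "complex option \<Rightarrow> bool" where
  "alg_pt x \<longleftrightarrow> (case x of None \<Rightarrow> True | Some z \<Rightarrow> algebraic z)"

definition two_periodic :: "ratmap \<Rightarrow> complex option \<Rightarrow> bool" where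
  "two_periodic phi x \<longleftrightarrow> rm_eval phi (rm_eval phi x) = x \<and> rm_eval phi x \<noteq> x"

definition mob :: "complex \<times> complex \<times> complex \<times> complex \<Rightarrow> complex option \<Rightarrow> complex option" where
  "mob s x = (case s of (a, b, c, d) \<Rightarrow> (case x of
      Some z \<Rightarrow> (if c * z + d = 0 then None else Some ((a * z + b) / (c * z + d)))
    | None \<Rightarrow> (if c = 0 then None else Some (a / c))))"

definition mob_nondeg :: "complex \<times> complex \<times> complex \<times> complex \<Rightarrow> bool" where
  "mob_nondeg s \<longleftrightarrow> (case s of (a, b, c, d) \<Rightarrow> a * d - b * c \<noteq> 0)"

definition mob_alg :: "complex \<times> complex \<times> complex \<times> complex \<Rightarrow> bool" where
  "mob_alg s \<longleftrightarrow> (case s of (a, b, c, d) \<Rightarrow> algebraic a \<and> algebraic b \<and> algebraic c \<and> algebraic d)"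

text \<open>sigma is in Aut(phi): sigma^-1 o phi o sigma = phi, i.e. phi o sigma = sigma o phi.\<close>
definition in_Aut :: "ratmap \<Rightarrow> complex \<times> complex \<times> complex \<times> complex \<Rightarrow> bool" where
  "in_Aut phi s \<longleftrightarrow> mob_nondeg s \<and> mob_alg s \<and>
     (\<forall>x. rm_eval phi (mob s x) = mob s (rm_eval phi x))"

definition Aut_trivial :: "ratmap \<Rightarrow> bool" where
  "Aut_trivial phi \<longleftrightarrow> (\<forall>s. in_Aut phi s \<longrightarrow> (\<forall>x. mob s x = x))"

text \<open>phi and psi are linearly conjugate over Q: psi = sigma^-1 o phi o sigma for some
  degree-one sigma in Q(x), i.e. phi o sigma = sigma o psi.\<close>
definition lin_conj_Q :: "ratmap \<Rightarrow> ratmap \<Rightarrow> bool" where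
  "lin_conj_Q phi psi \<longleftrightarrow> (\<exists>a b c d :: rat. a * d - b * c \<noteq> 0 \<and>
     (let s = (of_rat a, of_rat b, of_rat c, of_rat d) in
       (\<forall>x. rm_eval phi (mob s x) = mob s (rm_eval psi x))))"

definition phi_v :: "rat \<Rightarrow> ratmap" where
  "phi_v v = ([:-v, v:], [:0, 0, 1:])"

end

theory Submission
  imports Defs
begin


definition proj :: "complex \<Rightarrow> complex \<Rightarrow> complex option" where
  "proj X Y = (if Y = 0 then None else Some (X / Y))"

lemma proj_None: "proj 1 0 = None" by (simp add: proj_def)
lemma proj_Some: "proj z 1 = Some z" by (simp add: proj_def)

lemma proj_all: "\<exists>X Y. (X, Y) \<noteq> (0,0) \<and> P = proj X Y"
proof (cases P)
  case None then show ?thesis by (intro exI[of _ 1] exI[of _ 0]) (simp add: proj_def)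
next
  case (Some z) then show ?thesis by (intro exI[of _ z] exI[of _ 1]) (simp add: proj_def)
qed

lemma proj_scale: "k \<noteq> 0 \<Longrightarrow> proj (k * X) (k * Y) = proj X Y"
  by (simp add: proj_def)

lemma proj_eq_iff:
  assumes "(X, Y) \<noteq> (0,0)" "(X', Y') \<noteq> (0,0)"
  shows "proj X Y = proj X' Y' \<longleftrightarrow> X * Y' = X' * Y"
  using assms by (auto simp add: proj_def field_simps)

lemma mob_proj:
  assumes "a * d - b * c \<noteq> 0" "(X, Y) \<noteq> (0,0)"
  shows "mob (a, b, c, d) (proj X Y) = proj (a * X + b * Y) (c * X + d * Y)"
proof (cases "Y = 0")
  case True
  then have X: "X \<noteq> 0" using assms by auto
  show ?thesis using True X by (auto simp add: proj_def mob_def)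
next
  case False
  have e: "c * X / Y + d = (c * X + d * Y) / Y" "a * X / Y + b = (a * X + b * Y) / Y"
    using False by (auto simp add: field_simps)
  show ?thesis using False by (simp add: proj_def mob_def e)
qed

lemma mat_vec_nz:
  assumes "a * d - b * c \<noteq> (0::complex)" "(X, Y) \<noteq> (0,0)"
  shows "(a * X + b * Y, c * X + d * Y) \<noteq> (0,0)"
proof
  assume h: "(a * X + b * Y, c * X + d * Y) = (0,0)"
  have "(a * d - b * c) * X = d * (a * X + b * Y) - b * (c * X + d * Y)"
       "(a * d - b * c) * Y = a * (c * X + d * Y) - c * (a * X + b * Y)"
    by (simp_all add: algebra_simps)
  then have "(a * d - b * c) * X = 0" "(a * d - b * c) * Y = 0" using h by auto
  then show False using assms by auto
qed


datatype 'a hm = HM (hf2: 'a) (hf1: 'a) (hf0: 'a) (hg2: 'a) (hg1: 'a) (hg0: 'a)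

definition hF :: "'a::comm_ring_1 hm \<Rightarrow> 'a \<Rightarrow> 'a \<Rightarrow> 'a" where
  "hF h X Y = hf2 h * X^2 + hf1 h * X * Y + hf0 h * Y^2"
definition hG :: "'a::comm_ring_1 hm \<Rightarrow> 'a \<Rightarrow> 'a \<Rightarrow> 'a" where
  "hG h X Y = hg2 h * X^2 + hg1 h * X * Y + hg0 h * Y^2"
definition hW :: "'a::comm_ring_1 hm \<Rightarrow> 'a \<Rightarrow> 'a \<Rightarrow> 'a" where
  "hW h X Y = (hf2 h * hg1 h - hf1 h * hg2 h) * X^2 + 2 * (hf2 h * hg0 h - hf0 h * hg2 h) * X * Y
     + (hf1 h * hg0 h - hf0 h * hg1 h) * Y^2"

definition hconj :: "'a::comm_ring_1 \<Rightarrow> 'a \<Rightarrow> 'a \<Rightarrow> 'a \<Rightarrow> 'a hm \<Rightarrow> 'a hm" where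
  "hconj a b c d h = (let
     F2 = hf2 h * a^2 + hf1 h * a * c + hf0 h * c^2;
     F1 = 2 * hf2 h * a * b + hf1 h * (a * d + b * c) + 2 * hf0 h * c * d;
     F0 = hf2 h * b^2 + hf1 h * b * d + hf0 h * d^2;
     G2 = hg2 h * a^2 + hg1 h * a * c + hg0 h * c^2;
     G1 = 2 * hg2 h * a * b + hg1 h * (a * d + b * c) + 2 * hg0 h * c * d;
     G0 = hg2 h * b^2 + hg1 h * b * d + hg0 h * d^2
   in HM (d * F2 - b * G2) (d * F1 - b * G1) (d * F0 - b * G0)
         (a * G2 - c * F2) (a * G1 - c * F1) (a * G0 - c * F0))"

lemma hF_conj: "hF (hconj a b c d h) X Y = d * hF h (a*X+b*Y) (c*X+d*Y) - b * hG h (a*X+b*Y) (c*X+d*Y)"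
  by (simp add: hF_def hG_def hconj_def Let_def power2_eq_square algebra_simps)
lemma hG_conj: "hG (hconj a b c d h) X Y = a * hG h (a*X+b*Y) (c*X+d*Y) - c * hF h (a*X+b*Y) (c*X+d*Y)"
  by (simp add: hF_def hG_def hconj_def Let_def power2_eq_square algebra_simps)
lemma hW_conj: "hW (hconj a b c d h) X Y = (a*d-b*c)^2 * hW h (a*X+b*Y) (c*X+d*Y)"
  by (simp add: hW_def hconj_def Let_def power2_eq_square algebra_simps)

lemma hconj_comp: "hconj (a*a'+b*c') (a*b'+b*d') (c*a'+d*c') (c*b'+d*d') h = hconj a' b' c' d' (hconj a b c d h)"
  by (simp add: hconj_def Let_def power2_eq_square algebra_simps)


lemma hF_hom: "hF h (k*X) (k*Y) = k^2 * hF h X Y"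
  by (simp add: hF_def power2_eq_square algebra_simps)
lemma hG_hom: "hG h (k*X) (k*Y) = k^2 * hG h X Y"
  by (simp add: hG_def power2_eq_square algebra_simps)
lemma hW_hom: "hW h (k*X) (k*Y) = k^2 * hW h X Y"
  by (simp add: hW_def power2_eq_square algebra_simps)

definition hmap :: "complex hm \<Rightarrow> complex option \<Rightarrow> complex option" where
  "hmap h P = (case P of None \<Rightarrow> proj (hf2 h) (hg2 h) | Some z \<Rightarrow> proj (hF h z 1) (hG h z 1))"

definition hvalid :: "complex hm \<Rightarrow> bool" where
  "hvalid h \<longleftrightarrow> (\<forall>X Y. hF h X Y = 0 \<and> hG h X Y = 0 \<longrightarrow> X = 0 \<and> Y = 0)"

definition hcrit :: "complex hm \<Rightarrow> complex option \<Rightarrow> bool" where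
  "hcrit h P = (case P of None \<Rightarrow> hf2 h * hg1 h - hf1 h * hg2 h = 0 | Some z \<Rightarrow> hW h z 1 = 0)"

lemma hvalidD: "hvalid h \<Longrightarrow> (X, Y) \<noteq> (0,0) \<Longrightarrow> (hF h X Y, hG h X Y) \<noteq> (0,0)"
  unfolding hvalid_def by blast

lemma hmap_proj:
  assumes "hvalid h" "(X, Y) \<noteq> (0,0)"
  shows "hmap h (proj X Y) = proj (hF h X Y) (hG h X Y)"
proof (cases "Y = 0")
  case True
  then have X: "X \<noteq> 0" using assms by auto
  have "hF h X Y = X^2 * hf2 h" "hG h X Y = X^2 * hg2 h" using True by (simp_all add: hF_def hG_def)
  then have "proj (hF h X Y) (hG h X Y) = proj (X^2 * hf2 h) (X^2 * hg2 h)" by simp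
  also have "\<dots> = proj (hf2 h) (hg2 h)" using X by (intro proj_scale) simp
  finally show ?thesis using True by (simp add: hmap_def proj_def)
next
  case False
  have "hF h X Y = Y^2 * hF h (X/Y) 1" "hG h X Y = Y^2 * hG h (X/Y) 1"
    using hF_hom[of h Y "X/Y" 1] hG_hom[of h Y "X/Y" 1] False by simp_all
  then have "proj (hF h X Y) (hG h X Y) = proj (hF h (X/Y) 1) (hG h (X/Y) 1)"
    using False by (simp add: proj_scale)
  then show ?thesis using False by (simp add: hmap_def proj_def)
qed

lemma hcrit_proj:
  assumes "(X, Y) \<noteq> (0,0)"
  shows "hcrit h (proj X Y) \<longleftrightarrow> hW h X Y = 0"
proof (cases "Y = 0")
  case True
  then have X: "X \<noteq> 0" using assms by auto
  show ?thesis using True X by (simp add: hcrit_def proj_def hW_def)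
next
  case False
  have "hW h X Y = Y^2 * hW h (X/Y) 1"
    using hW_hom[of h Y "X/Y" 1] False by simp
  then show ?thesis using False by (simp add: hcrit_def proj_def)
qed

lemma hvalid_conj:
  assumes "hvalid h" "a * d - b * c \<noteq> 0"
  shows "hvalid (hconj a b c d h)"
  unfolding hvalid_def
proof (intro allI impI)
  fix X Y assume h0: "hF (hconj a b c d h) X Y = 0 \<and> hG (hconj a b c d h) X Y = 0"
  show "X = 0 \<and> Y = 0"
  proof (rule ccontr)
    assume "\<not> (X = 0 \<and> Y = 0)"
    then have nz: "(a * X + b * Y, c * X + d * Y) \<noteq> (0,0)" using mat_vec_nz[OF assms(2)] by auto
    let ?F = "hF h (a*X+b*Y) (c*X+d*Y)" and ?G = "hG h (a*X+b*Y) (c*X+d*Y)"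
    have e: "d * ?F - b * ?G = 0" "a * ?G - c * ?F = 0" using h0 by (simp_all add: hF_conj hG_conj)
    have "(?F, ?G) \<noteq> (0,0)" using hvalidD[OF assms(1) nz] .
    moreover have "(a * d - b * c) * ?F = a * (d * ?F - b * ?G) + b * (a * ?G - c * ?F)"
                  "(a * d - b * c) * ?G = d * (a * ?G - c * ?F) + c * (d * ?F - b * ?G)"
      by (simp_all add: algebra_simps)
    ultimately show False using e assms(2) by auto
  qed
qed

lemma hmap_conj:
  assumes "hvalid h" "a * d - b * c \<noteq> 0"
  shows "hmap h (mob (a, b, c, d) P) = mob (a, b, c, d) (hmap (hconj a b c d h) P)"
proof -
  obtain X Y where XY: "(X, Y) \<noteq> (0,0)" "P = proj X Y" using proj_all by blast
  have v: "hvalid (hconj a b c d h)" using hvalid_conj[OF assms] .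
  let ?F = "hF h (a*X+b*Y) (c*X+d*Y)" and ?G = "hG h (a*X+b*Y) (c*X+d*Y)"
  have nz: "(a * X + b * Y, c * X + d * Y) \<noteq> (0,0)" using mat_vec_nz[OF assms(2) XY(1)] .
  have nz2: "(hF (hconj a b c d h) X Y, hG (hconj a b c d h) X Y) \<noteq> (0,0)" using hvalidD[OF v XY(1)] .
  have "mob (a, b, c, d) (hmap (hconj a b c d h) P)
     = proj (a * (d * ?F - b * ?G) + b * (a * ?G - c * ?F)) (c * (d * ?F - b * ?G) + d * (a * ?G - c * ?F))"
    using XY nz2 by (simp add: hmap_proj[OF v] mob_proj[OF assms(2)] hF_conj hG_conj)
  also have "\<dots> = proj ((a * d - b * c) * ?F) ((a * d - b * c) * ?G)"
    by (rule arg_cong2[where f=proj]) (simp_all add: algebra_simps)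
  also have "\<dots> = proj ?F ?G" using assms(2) by (rule proj_scale)
  also have "\<dots> = hmap h (mob (a, b, c, d) P)"
    using XY nz by (simp add: hmap_proj[OF assms(1)] mob_proj[OF assms(2)])
  finally show ?thesis by simp
qed

lemma hcrit_conj:
  assumes "a * d - b * c \<noteq> 0"
  shows "hcrit (hconj a b c d h) P \<longleftrightarrow> hcrit h (mob (a, b, c, d) P)"
proof -
  obtain X Y where XY: "(X, Y) \<noteq> (0,0)" "P = proj X Y" using proj_all by blast
  have nz: "(a * X + b * Y, c * X + d * Y) \<noteq> (0,0)" using mat_vec_nz[OF assms XY(1)] .
  show ?thesis using XY nz assms
    by (simp add: hcrit_proj mob_proj hW_conj)
qed

lemma mob_comp:
  assumes "a * d - b * c \<noteq> 0" "a' * d' - b' * c' \<noteq> 0"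
  shows "mob (a, b, c, d) (mob (a', b', c', d') P) =
         mob (a*a'+b*c', a*b'+b*d', c*a'+d*c', c*b'+d*d') P"
proof -
  obtain X Y where XY: "(X, Y) \<noteq> (0,0)" "P = proj X Y" using proj_all by blast
  have nz: "(a' * X + b' * Y, c' * X + d' * Y) \<noteq> (0,0)" using mat_vec_nz[OF assms(2) XY(1)] .
  have d: "(a*a'+b*c') * (c*b'+d*d') - (a*b'+b*d') * (c*a'+d*c') = (a * d - b * c) * (a' * d' - b' * c')"
    by (simp add: algebra_simps)
  have d2: "(a*a'+b*c') * (c*b'+d*d') - (a*b'+b*d') * (c*a'+d*c') \<noteq> 0" using d assms by simp
  show ?thesis using XY nz
    apply (simp add: mob_proj[OF assms(2)] mob_proj[OF assms(1)] mob_proj[OF d2])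
    apply (rule arg_cong2[where f=proj]) by (simp_all add: algebra_simps)
qed

lemma mob_scalar: "k \<noteq> 0 \<Longrightarrow> mob (k, 0, 0, k) P = P"
  by (cases P) (auto simp: mob_def)

lemma mob_adj_left:
  assumes "a * d - b * c \<noteq> 0"
  shows "mob (d, -b, -c, a) (mob (a, b, c, d) P) = P"
proof -
  have "d * a - (-b) * (-c) \<noteq> 0" using assms by (simp add: algebra_simps)
  then have "mob (d, -b, -c, a) (mob (a, b, c, d) P) = mob (a*d-b*c, 0, 0, a*d-b*c) P"
    using mob_comp[where a=d and b="-b" and c="-c" and d=a and a'=a and b'=b and c'=c and d'=d and P=P] assms by (simp add: algebra_simps)
  then show ?thesis using mob_scalar assms by simp
qed

lemma mob_adj_right:
  assumes "a * d - b * c \<noteq> 0"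
  shows "mob (a, b, c, d) (mob (d, -b, -c, a) P) = P"
proof -
  have "d * a - (-b) * (-c) \<noteq> 0" using assms by (simp add: algebra_simps)
  then have "mob (a, b, c, d) (mob (d, -b, -c, a) P) = mob (a*d-b*c, 0, 0, a*d-b*c) P"
    using mob_comp[where a'=d and b'="-b" and c'="-c" and d'=a and a=a and b=b and c=c and d=d and P=P] assms by (simp add: algebra_simps)
  then show ?thesis using mob_scalar assms by simp
qed

definition hsc :: "'a::comm_ring_1 \<Rightarrow> 'a hm \<Rightarrow> 'a hm" where
  "hsc k h = HM (k * hf2 h) (k * hf1 h) (k * hf0 h) (k * hg2 h) (k * hg1 h) (k * hg0 h)"

lemma hmap_hsc: "k \<noteq> 0 \<Longrightarrow> hmap (hsc k h) P = hmap h P"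
proof -
  assume k: "k \<noteq> 0"
  have "hF (hsc k h) X Y = k * hF h X Y" "hG (hsc k h) X Y = k * hG h X Y" for X Y
    by (simp_all add: hsc_def hF_def hG_def algebra_simps)
  then show ?thesis using k by (cases P) (simp_all add: hmap_def proj_scale, simp add: hsc_def proj_scale)
qed



lemma quad_root: "(g2::complex) \<noteq> 0 \<Longrightarrow> \<exists>w. g2*w^2 + g1*w + g0 = 0"
proof -
  assume g: "g2 \<noteq> 0"
  define s where "s = csqrt (g1^2 - 4*g2*g0)"
  have s2: "s^2 = g1^2 - 4*g2*g0" unfolding s_def by simp
  define w where "w = (-g1 + s) / (2*g2)"
  have "4*g2*(g2*w^2 + g1*w + g0) = (2*g2*w + g1)^2 - (g1^2 - 4*g2*g0)"
    by (simp add: algebra_simps power2_eq_square)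
  also have "2*g2*w + g1 = s" using g unfolding w_def by (simp add: field_simps)
  finally have "4*g2*(g2*w^2 + g1*w + g0) = 0" using s2 by simp
  then show ?thesis using g by auto
qed

definition hc :: "ratmap \<Rightarrow> complex hm" where
  "hc phi = HM (of_rat (coeff (fst phi) 2)) (of_rat (coeff (fst phi) 1)) (of_rat (coeff (fst phi) 0))
               (of_rat (coeff (snd phi) 2)) (of_rat (coeff (snd phi) 1)) (of_rat (coeff (snd phi) 0))"

lemma map_of_rat_quad:
  assumes "degree (p::rat poly) \<le> 2"
  shows "map_poly (of_rat :: rat \<Rightarrow> complex) p = [:of_rat (coeff p 0), of_rat (coeff p 1), of_rat (coeff p 2):]"
proof (rule poly_eqI)
  fix n
  show "coeff (map_poly (of_rat :: rat \<Rightarrow> complex) p) n = coeff [:of_rat (coeff p 0), of_rat (coeff p 1), of_rat (coeff p 2):] n"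
  proof (cases "n \<le> 2")
    case True
    then have "n = 0 \<or> n = 1 \<or> n = 2" by auto
    then show ?thesis by (auto simp: coeff_map_poly numeral_2_eq_2)
  next
    case False
    then have "coeff p n = 0" using assms by (intro coeff_eq_0) auto
    moreover have "coeff [:a, b, c:] n = 0" for a b c :: complex
      using False by (cases n; cases "n - 1"; cases "n - 2") auto
    ultimately show ?thesis by (simp add: coeff_map_poly)
  qed
qed

lemma degs:
  assumes "rm_deg phi = 2"
  shows "degree (fst phi) \<le> 2" "degree (snd phi) \<le> 2"
  using assms unfolding rm_deg_def by auto

lemma num_eq: "rm_deg phi = 2 \<Longrightarrow> rm_num phi = [:hf0 (hc phi), hf1 (hc phi), hf2 (hc phi):]"
  unfolding rm_num_def hc_def using degs map_of_rat_quad by simp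
lemma den_eq: "rm_deg phi = 2 \<Longrightarrow> rm_den phi = [:hg0 (hc phi), hg1 (hc phi), hg2 (hc phi):]"
  unfolding rm_den_def hc_def using degs map_of_rat_quad by simp

lemma poly_quad: "poly [:a0, a1, a2:] (z::complex) = a2 * z^2 + a1 * z + a0"
  by (simp add: algebra_simps numeral_2_eq_2)

lemma deg2_coeff: "degree (q::rat poly) = 2 \<Longrightarrow> coeff q 2 \<noteq> 0"
proof -
  assume d: "degree q = 2"
  then have "q \<noteq> 0" by auto
  then show ?thesis using d leading_coeff_neq_0[of q] by simp
qed

lemma poly_num: "rm_deg phi = 2 \<Longrightarrow> poly (rm_num phi) z = hF (hc phi) z 1"
  by (subst num_eq, assumption, subst poly_quad, simp add: hF_def)
lemma poly_den: "rm_deg phi = 2 \<Longrightarrow> poly (rm_den phi) z = hG (hc phi) z 1"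
  by (subst den_eq, assumption, subst poly_quad, simp add: hG_def)

lemma deg_cond:
  assumes "rm_deg phi = 2"
  shows "degree (fst phi) > degree (snd phi) \<longleftrightarrow> hg2 (hc phi) = 0"
proof -
  have a: "degree (fst phi) \<le> 2" "degree (snd phi) \<le> 2" using degs[OF assms] by auto
  have m: "max (degree (fst phi)) (degree (snd phi)) = 2" using assms unfolding rm_deg_def .
  have "hg2 (hc phi) = 0 \<longleftrightarrow> coeff (snd phi) 2 = 0" by (simp add: hc_def)
  also have "\<dots> \<longleftrightarrow> degree (snd phi) < 2"
  proof
    assume "coeff (snd phi) 2 = 0"
    then have "degree (snd phi) \<noteq> 2" using deg2_coeff by blast
    then show "degree (snd phi) < 2" using a by auto
  next
    assume "degree (snd phi) < 2" then show "coeff (snd phi) 2 = 0" by (simp add: coeff_eq_0)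
  qed
  also have "\<dots> \<longleftrightarrow> degree (fst phi) > degree (snd phi)" using m a by auto
  finally show ?thesis by simp
qed

lemma f2g2:
  assumes "rm_deg phi = 2"
  shows "hf2 (hc phi) \<noteq> 0 \<or> hg2 (hc phi) \<noteq> 0"
proof -
  have m: "max (degree (fst phi)) (degree (snd phi)) = 2" using assms unfolding rm_deg_def .
  then have "degree (fst phi) = 2 \<or> degree (snd phi) = 2" by (metis max_def)
  then have "coeff (fst phi) 2 \<noteq> 0 \<or> coeff (snd phi) 2 \<noteq> 0" using deg2_coeff by blast
  then show ?thesis by (simp add: hc_def)
qed

lemma rm_eval_hmap:
  assumes "rm_deg phi = 2"
  shows "rm_eval phi P = hmap (hc phi) P"
proof (cases P)
  case None
  have c: "coeff (rm_num phi) (rm_deg phi) = hf2 (hc phi)" "coeff (rm_den phi) (rm_deg phi) = hg2 (hc phi)"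
    using assms by (simp_all add: num_eq den_eq numeral_2_eq_2)
  show ?thesis using None c deg_cond[OF assms] by (simp add: rm_eval_def hmap_def proj_def)
next
  case (Some z)
  show ?thesis using Some assms by (simp add: rm_eval_def hmap_def proj_def poly_num poly_den)
qed


lemma mop_add: "map_poly (of_rat::rat\<Rightarrow>complex) (p + q) = map_poly of_rat p + map_poly of_rat q"
  by (rule poly_eqI) (simp add: coeff_map_poly of_rat_add)
lemma mop_mult: "map_poly (of_rat::rat\<Rightarrow>complex) (p * q) = map_poly of_rat p * map_poly of_rat q"
  by (rule poly_eqI) (simp add: coeff_map_poly coeff_mult of_rat_sum of_rat_mult)

lemma quad_repr:
  assumes "degree (p::'a::comm_ring_1 poly) \<le> 2"
  shows "p = [:coeff p 0, coeff p 1, coeff p 2:]"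
proof (rule poly_eqI)
  fix n
  show "coeff p n = coeff [:coeff p 0, coeff p 1, coeff p 2:] n"
  proof (cases "n \<le> 2")
    case True
    then have "n = 0 \<or> n = 1 \<or> n = 2" by auto
    then show ?thesis by (auto simp: numeral_2_eq_2)
  next
    case False
    then have "coeff p n = 0" using assms by (intro coeff_eq_0) auto
    moreover have "coeff [:a, b, c:] n = 0" for a b c :: 'a
      using False by (cases n; cases "n - 1"; cases "n - 2") auto
    ultimately show ?thesis by simp
  qed
qed

lemma lin_irr:
  assumes "(a::complex) \<in> \<rat>" "b \<in> \<rat>" "a * z + b = 0" "z \<notin> \<rat>"
  shows "a = 0 \<and> b = 0"
proof (cases "a = 0")
  case True then show ?thesis using assms by simp
next
  case False
  have "z = (a * z) / a" using False by simp
  also have "a * z = - b" using assms(3) by (simp add: eq_neg_iff_add_eq_0)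
  finally have "z \<in> \<rat>" using assms(1,2) by simp
  then show ?thesis using assms(4) by simp
qed

lemma poly_of_rat_quad:
  assumes "degree (p::rat poly) \<le> 2"
  shows "poly (map_poly (of_rat::rat\<Rightarrow>complex) p) z
     = of_rat (coeff p 2) * z^2 + of_rat (coeff p 1) * z + of_rat (coeff p 0)"
  using map_of_rat_quad[OF assms] poly_quad by simp

lemma lead2_nz:
  assumes cp: "coprime (p::rat poly) q" and dp: "degree p \<le> 2" and dq: "degree q \<le> 2"
    and zq: "z \<notin> \<rat>"
    and pz: "poly (map_poly (of_rat::rat\<Rightarrow>complex) p) z = 0" and qz: "poly (map_poly (of_rat::rat\<Rightarrow>complex) q) z = 0"
  shows "coeff p 2 \<noteq> 0"
proof
  assume c2: "coeff p 2 = 0"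
  have "of_rat (coeff p 1) * z + of_rat (coeff p 0) = (0::complex)"
    using pz c2 unfolding poly_of_rat_quad[OF dp] by simp
  then have "(of_rat (coeff p 1)::complex) = 0 \<and> (of_rat (coeff p 0)::complex) = 0"
    using lin_irr[OF Rats_of_rat Rats_of_rat _ zq] by blast
  then have "p = 0" using quad_repr[OF dp] c2 by simp
  then have "is_unit q" using cp by simp
  then have qn: "q \<noteq> 0" by auto
  then have "degree q = 0" using is_unit_iff_degree \<open>is_unit q\<close> by blast
  then have "q = [:coeff q 0:]" by (metis degree_eq_zeroE coeff_pCons_0)
  then have "poly (map_poly (of_rat::rat\<Rightarrow>complex) q) z = of_rat (coeff q 0)"
    by (metis (no_types) map_poly_pCons map_poly_0 of_rat_0 poly_pCons poly_0 mult_zero_right add.right_neutral pCons_0_0 map_poly_1' of_rat_1)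
  then have "coeff q 0 = 0" using qz by simp
  then have "q = 0" using \<open>q = [:coeff q 0:]\<close> by simp
  then show False using qn by simp
qed

lemma no_common_root:
  assumes cp: "coprime (p::rat poly) q" and dp: "degree p \<le> 2" and dq: "degree q \<le> 2"
    and pz: "poly (map_poly (of_rat::rat\<Rightarrow>complex) p) z = 0" and qz: "poly (map_poly (of_rat::rat\<Rightarrow>complex) q) z = 0"
  shows False
proof (cases "z \<in> \<rat>")
  case True
  then obtain r where r: "z = of_rat r" by (auto elim: Rats_cases)
  have "of_rat (poly p r) = (0::complex)" using pz unfolding r poly_of_rat_quad[OF dp]
    by (subst quad_repr[OF dp]) (simp add: of_rat_add of_rat_mult of_rat_power algebra_simps power2_eq_square)
  then have "poly p r = 0" by simp
  then have d1: "[:-r, 1:] dvd p" using poly_eq_0_iff_dvd by blast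
  have "of_rat (poly q r) = (0::complex)" using qz unfolding r poly_of_rat_quad[OF dq]
    by (subst quad_repr[OF dq]) (simp add: of_rat_add of_rat_mult of_rat_power algebra_simps power2_eq_square)
  then have "poly q r = 0" by simp
  then have d2: "[:-r, 1:] dvd q" using poly_eq_0_iff_dvd by blast
  have "is_unit [:-r, 1:]" using coprime_common_divisor[OF cp d1 d2] .
  then show False using is_unit_iff_degree[of "[:-r, 1:]"] by simp
next
  case False
  have p2: "coeff p 2 \<noteq> 0" using lead2_nz[OF cp dp dq False pz qz] .
  have q2: "coeff q 2 \<noteq> 0" using lead2_nz[OF _ dq dp False qz pz] cp by (simp add: coprime_commute)
  define a1 where "a1 = coeff q 2 * coeff p 1 - coeff p 2 * coeff q 1"
  define a0 where "a0 = coeff q 2 * coeff p 0 - coeff p 2 * coeff q 0"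
  have "(of_rat (coeff q 2) :: complex) * poly (map_poly of_rat p) z - of_rat (coeff p 2) * poly (map_poly of_rat q) z
        = of_rat a1 * z + of_rat a0"
    unfolding poly_of_rat_quad[OF dp] poly_of_rat_quad[OF dq] a1_def a0_def
    by (simp add: of_rat_add of_rat_mult of_rat_diff algebra_simps)
  then have "(of_rat a1 :: complex) * z + of_rat a0 = 0" using pz qz by simp
  then have "(of_rat a1 :: complex) = 0 \<and> (of_rat a0 :: complex) = 0" using lin_irr[OF Rats_of_rat Rats_of_rat _ False] by blast
  then have a: "a1 = 0" "a0 = 0" by simp_all
  have e: "smult (coeff q 2) p = smult (coeff p 2) q"
  proof (rule poly_eqI)
    fix n
    consider "n = 0" | "n = 1" | "n = 2" | "n > (2::nat)" by linarith
    then show "coeff (smult (coeff q 2) p) n = coeff (smult (coeff p 2) q) n"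
    proof cases
      case 4
      then have "coeff p n = 0" "coeff q n = 0" using dp dq by (auto intro: coeff_eq_0)
      then show ?thesis by simp
    qed (use a in \<open>auto simp: a1_def a0_def algebra_simps\<close>)
  qed
  define c where "c = smult (1 / coeff p 2) p"
  have pc: "p = smult (coeff p 2) c" unfolding c_def using p2 by simp
  have qc: "q = smult (coeff q 2) c"
  proof -
    have "smult (coeff p 2) q = smult (coeff p 2) (smult (coeff q 2) c)"
      unfolding e[symmetric] c_def using p2 by (simp add: algebra_simps)
    then have "smult (1 / coeff p 2) (smult (coeff p 2) q) = smult (1 / coeff p 2) (smult (coeff p 2) (smult (coeff q 2) c))"
      by (rule arg_cong)
    then show ?thesis using p2 by (simp add: smult_smult field_simps)
  qed
  have "c dvd p" "c dvd q" using pc qc by (metis dvd_refl dvd_smult)+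
  then have u: "is_unit c" using coprime_common_divisor[OF cp] by blast
  have "degree c = 2"
  proof -
    have "degree p \<ge> 2" using p2 le_degree by blast
    then show ?thesis unfolding c_def using p2 dp by simp
  qed
  moreover have "c \<noteq> 0" using \<open>degree c = 2\<close> by auto
  ultimately show False using u is_unit_iff_degree[of c] by simp
qed

lemma hvalid_hc:
  assumes "rm_valid phi" "rm_deg phi = 2"
  shows "hvalid (hc phi)"
  unfolding hvalid_def
proof (intro allI impI, rule ccontr)
  fix X Y assume h: "hF (hc phi) X Y = 0 \<and> hG (hc phi) X Y = 0" and n: "\<not> (X = 0 \<and> Y = 0)"
  show False
  proof (cases "Y = 0")
    case True
    then have "X \<noteq> 0" using n by auto
    then have "hf2 (hc phi) = 0" "hg2 (hc phi) = 0" using h True by (auto simp: hF_def hG_def)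
    then show False using f2g2[OF assms(2)] by auto
  next
    case False
    have "hF (hc phi) X Y = Y^2 * hF (hc phi) (X/Y) 1" "hG (hc phi) X Y = Y^2 * hG (hc phi) (X/Y) 1"
      using hF_hom[of "hc phi" Y "X/Y" 1] hG_hom[of "hc phi" Y "X/Y" 1] False by simp_all
    then have "poly (rm_num phi) (X/Y) = 0" "poly (rm_den phi) (X/Y) = 0"
      using h False assms(2) by (simp_all add: poly_num poly_den)
    then show False using no_common_root[of "fst phi" "snd phi" "X/Y"] assms(1) degs[OF assms(2)]
      unfolding rm_valid_def rm_num_def rm_den_def by auto
  qed
qed

lemma order_ge2:
  assumes "H \<noteq> (0::complex poly)" "poly H z = 0"
  shows "2 \<le> order z H \<longleftrightarrow> poly (pderiv H) z = 0"
proof (cases "pderiv H = 0")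
  case True
  then obtain c where "H = [:c:]" using pderiv_iszero by blast
  then show ?thesis using assms by auto
next
  case False
  have "order z H = Suc (order z (pderiv H))" using order_pderiv[OF assms] .
  moreover have "poly (pderiv H) z = 0 \<longleftrightarrow> order z (pderiv H) \<noteq> 0" using order_root[of "pderiv H" z] False by simp
  ultimately show ?thesis by auto
qed

lemma hW_pderiv:
  "hW h z 1 = poly (pderiv [:hf0 h, hf1 h, hf2 h:]) z * poly [:hg0 h, hg1 h, hg2 h:] z
             - poly [:hf0 h, hf1 h, hf2 h:] z * poly (pderiv [:hg0 h, hg1 h, hg2 h:]) z"
  by (simp add: hW_def pderiv_pCons algebra_simps numeral_2_eq_2)


lemma den_nz: "rm_valid phi \<Longrightarrow> rm_den phi \<noteq> 0"
proof
  assume v: "rm_valid phi" and d: "rm_den phi = 0"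
  have "snd phi = 0"
  proof (rule poly_eqI)
    fix n
    have "coeff (rm_den phi) n = 0" using d by simp
    then show "coeff (snd phi) n = coeff 0 n" unfolding rm_den_def by (simp add: coeff_map_poly)
  qed
  then show False using v unfolding rm_valid_def by simp
qed

lemma crit_Some:
  assumes v: "rm_valid phi" and dg: "rm_deg phi = 2"
  shows "critical_pt phi (Some z) \<longleftrightarrow> hcrit (hc phi) (Some z)"
proof -
  define h where "h = hc phi"
  define PN where "PN = rm_num phi"
  define QD where "QD = rm_den phi"
  have PN: "PN = [:hf0 h, hf1 h, hf2 h:]" unfolding PN_def h_def using num_eq[OF dg] .
  have QD: "QD = [:hg0 h, hg1 h, hg2 h:]" unfolding QD_def h_def using den_eq[OF dg] .
  have hv: "hvalid h" unfolding h_def using hvalid_hc[OF v dg] .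
  have W: "hW h z 1 = poly (pderiv PN) z * poly QD z - poly PN z * poly (pderiv QD) z"
    unfolding PN QD by (rule hW_pderiv)
  have pF: "poly PN z = hF h z 1" unfolding PN_def h_def using poly_num[OF dg] .
  have pG: "poly QD z = hG h z 1" unfolding QD_def h_def using poly_den[OF dg] .
  show ?thesis
  proof (cases "poly QD z = 0")
    case True
    have ev: "rm_eval phi (Some z) = None" using True unfolding QD_def by (simp add: rm_eval_def)
    have ri: "ram_index phi (Some z) = order z QD"
      unfolding ram_index_def ev by (simp add: rm_fiber_poly_def QD_def)
    have "poly PN z \<noteq> 0" using hvalidD[OF hv, of z 1] pF pG True by auto
    then have "hW h z 1 = 0 \<longleftrightarrow> poly (pderiv QD) z = 0" using W True by simp
    moreover have "2 \<le> order z QD \<longleftrightarrow> poly (pderiv QD) z = 0"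
      using order_ge2[OF _ True] den_nz[OF v] unfolding QD_def by simp
    ultimately show ?thesis unfolding critical_pt_def ri hcrit_def h_def by simp
  next
    case False
    define a where "a = poly PN z / poly QD z"
    have ev: "rm_eval phi (Some z) = Some a" using False unfolding QD_def a_def PN_def by (simp add: rm_eval_def)
    define H where "H = PN - smult a QD"
    have ri: "ram_index phi (Some z) = order z H"
      unfolding ram_index_def ev by (simp add: rm_fiber_poly_def QD_def PN_def H_def)
    have Hz: "poly H z = 0" unfolding H_def a_def using False by simp
    have Hnz: "H \<noteq> 0"
    proof
      assume "H = 0"
      then have e: "PN = smult a QD" unfolding H_def by simp
      then have c: "hf2 h = a * hg2 h" "hf1 h = a * hg1 h" "hf0 h = a * hg0 h"
        unfolding PN QD by simp_all
      show False
      proof (cases "hg2 h = 0")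
        case True
        then show False using f2g2[OF dg] c unfolding h_def by auto
      next
        case False
        then obtain w where w: "hg2 h * w^2 + hg1 h * w + hg0 h = 0" using quad_root by blast
        then have "hG h w 1 = 0" "hF h w 1 = 0" using c by (simp_all add: hG_def hF_def algebra_simps)
          (metis mult_zero_right distrib_left mult.assoc)
        then show False using hvalidD[OF hv, of w 1] by simp
      qed
    qed
    have "poly (pderiv H) z = poly (pderiv PN) z - a * poly (pderiv QD) z"
      unfolding H_def by (simp add: pderiv_diff pderiv_smult)
    also have "\<dots> = hW h z 1 / poly QD z" using False unfolding W a_def by (simp add: field_simps)
    finally have "poly (pderiv H) z = 0 \<longleftrightarrow> hW h z 1 = 0" using False by simp
    then show ?thesis unfolding critical_pt_def ri hcrit_def h_def using order_ge2[OF Hnz Hz] by simp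
  qed
qed

lemma crit_None:
  assumes v: "rm_valid phi" and dg: "rm_deg phi = 2"
  shows "critical_pt phi None \<longleftrightarrow> hcrit (hc phi) None"
proof -
  define h where "h = hc phi"
  have PN: "rm_num phi = [:hf0 h, hf1 h, hf2 h:]" unfolding h_def using num_eq[OF dg] .
  have QD: "rm_den phi = [:hg0 h, hg1 h, hg2 h:]" unfolding h_def using den_eq[OF dg] .
  have ev: "rm_eval phi None = proj (hf2 h) (hg2 h)"
    unfolding h_def rm_eval_hmap[OF dg] by (simp add: hmap_def)
  show ?thesis
  proof (cases "hg2 h = 0")
    case True
    then have f2: "hf2 h \<noteq> 0" using f2g2[OF dg] unfolding h_def by auto
    have ri: "ram_index phi None = 2 - degree [:hg0 h, hg1 h, hg2 h:]"
      unfolding ram_index_def ev using True dg by (simp add: rm_fiber_poly_def QD proj_def)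
    show ?thesis unfolding critical_pt_def ri hcrit_def h_def[symmetric] using True f2 by auto
  next
    case False
    define a where "a = hf2 h / hg2 h"
    have ev': "rm_eval phi None = Some a" using ev False by (simp add: proj_def a_def)
    have H: "rm_fiber_poly phi (Some a) = [:hf0 h - a * hg0 h, hf1 h - a * hg1 h:]"
      unfolding rm_fiber_poly_def PN QD using False by (simp add: a_def)
    have ri: "ram_index phi None = 2 - degree [:hf0 h - a * hg0 h, hf1 h - a * hg1 h:]"
      unfolding ram_index_def ev' H using dg by simp
    have "hf1 h - a * hg1 h = 0 \<longleftrightarrow> hf2 h * hg1 h - hf1 h * hg2 h = 0"
      using False unfolding a_def by (auto simp: field_simps)
    then show ?thesis unfolding critical_pt_def ri hcrit_def h_def[symmetric] by auto
  qed
qed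

lemma crit_hcrit:
  assumes "rm_valid phi" "rm_deg phi = 2"
  shows "critical_pt phi P \<longleftrightarrow> hcrit (hc phi) P"
  using crit_Some[OF assms] crit_None[OF assms] by (cases P) auto



lemma normal_form:
  assumes hv: "hvalid h" and n0: "(X0, Y0) \<noteq> (0,0)" and n1: "(U, V) \<noteq> (0,0)"
    and m1: "hmap h (proj X0 Y0) = proj U V" and m2: "hmap h (proj U V) = proj X0 Y0"
    and ne: "proj U V \<noteq> proj X0 Y0" and cr: "hcrit h (proj X0 Y0)"
  shows "U * Y0 - X0 * V \<noteq> 0" "hf2 (hconj U X0 V Y0 h) = 0" "hg0 (hconj U X0 V Y0 h) = 0"
    "hg1 (hconj U X0 V Y0 h) = 0" "hf0 (hconj U X0 V Y0 h) \<noteq> 0" "hg2 (hconj U X0 V Y0 h) \<noteq> 0"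
    "hcrit h (proj U V) \<Longrightarrow> hf1 (hconj U X0 V Y0 h) = 0"
proof -
  show det: "U * Y0 - X0 * V \<noteq> 0" using ne proj_eq_iff[OF n1 n0] by auto
  define psi where "psi = hconj U X0 V Y0 h"
  have pv: "hvalid psi" unfolding psi_def using hvalid_conj[OF hv det] .
  have e1: "hF h X0 Y0 * V = U * hG h X0 Y0"
    using m1 hmap_proj[OF hv n0] proj_eq_iff[OF hvalidD[OF hv n0] n1] by simp
  have e2: "hF h U V * Y0 = X0 * hG h U V"
    using m2 hmap_proj[OF hv n1] proj_eq_iff[OF hvalidD[OF hv n1] n0] by simp
  have "hg0 psi = hG psi 0 1" by (simp add: hG_def)
  also have "\<dots> = U * hG h X0 Y0 - V * hF h X0 Y0" unfolding psi_def hG_conj by simp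
  also have "\<dots> = 0" using e1 by (simp add: algebra_simps)
  finally show g0: "hg0 (hconj U X0 V Y0 h) = 0" unfolding psi_def .
  have "hf2 psi = hF psi 1 0" by (simp add: hF_def)
  also have "\<dots> = Y0 * hF h U V - X0 * hG h U V" unfolding psi_def hF_conj by simp
  also have "\<dots> = 0" using e2 by (simp add: algebra_simps)
  finally show f2: "hf2 (hconj U X0 V Y0 h) = 0" unfolding psi_def .
  have "(hF psi 0 1, hG psi 0 1) \<noteq> (0,0)" using hvalidD[OF pv, of 0 1] by simp
  then show f0: "hf0 (hconj U X0 V Y0 h) \<noteq> 0" using g0 unfolding psi_def by (simp add: hF_def hG_def)
  have "(hF psi 1 0, hG psi 1 0) \<noteq> (0,0)" using hvalidD[OF pv, of 1 0] by simp
  then show g2: "hg2 (hconj U X0 V Y0 h) \<noteq> 0" using f2 unfolding psi_def by (simp add: hF_def hG_def)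
  have "mob (U, X0, V, Y0) (proj 0 1) = proj X0 Y0" using mob_proj[OF det, of 0 1] by simp
  then have "hcrit psi (proj 0 1)" using cr hcrit_conj[OF det, of h "proj 0 1"] unfolding psi_def by simp
  then have "hW psi 0 1 = 0" using hcrit_proj[of 0 1 psi] by simp
  then show "hg1 (hconj U X0 V Y0 h) = 0" using g0 f0 unfolding psi_def by (simp add: hW_def)
  assume cr2: "hcrit h (proj U V)"
  have "mob (U, X0, V, Y0) (proj 1 0) = proj U V" using mob_proj[OF det, of 1 0] by simp
  then have "hcrit psi (proj 1 0)" using cr2 hcrit_conj[OF det, of h "proj 1 0"] unfolding psi_def by simp
  then have "hW psi 1 0 = 0" using hcrit_proj[of 1 0 psi] by simp
  then show "hf1 (hconj U X0 V Y0 h) = 0" using f2 g2 unfolding psi_def by (simp add: hW_def)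
qed


lemma two_crit_cycle:
  assumes hv: "hvalid h" and n0: "(X0, Y0) \<noteq> (0,0)"
    and c1: "hcrit h (proj X0 Y0)" "hmap h (hmap h (proj X0 Y0)) = proj X0 Y0" "hmap h (proj X0 Y0) \<noteq> proj X0 Y0"
    and c2: "hcrit h c2" "hmap h (hmap h c2) = c2" "hmap h c2 \<noteq> c2"
    and ne: "c2 \<noteq> proj X0 Y0"
  shows "hmap h (proj X0 Y0) = c2"
proof -
  define U where "U = hF h X0 Y0"
  define V where "V = hG h X0 Y0"
  have n1: "(U, V) \<noteq> (0,0)" unfolding U_def V_def using hvalidD[OF hv n0] .
  have m1: "hmap h (proj X0 Y0) = proj U V" unfolding U_def V_def using hmap_proj[OF hv n0] .
  note NF = normal_form[OF hv n0 n1 m1 _ _ c1(1)]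
  have m2: "hmap h (proj U V) = proj X0 Y0" using c1(2) m1 by simp
  have ne1: "proj U V \<noteq> proj X0 Y0" using c1(3) m1 by simp
  note NF = NF[OF m2 ne1]
  have det: "U * Y0 - X0 * V \<noteq> 0" using NF(1) .
  define psi where "psi = hconj U X0 V Y0 h"
  define f1 where "f1 = hf1 psi"
  define f0 where "f0 = hf0 psi"
  define g2 where "g2 = hg2 psi"
  have psi: "psi = HM 0 f1 f0 g2 0 0" unfolding f1_def f0_def g2_def psi_def
    using NF(2,3,4) by (metis hm.collapse)
  have f0: "f0 \<noteq> 0" and g2: "g2 \<noteq> 0" using NF(5,6) unfolding f0_def g2_def psi_def by auto
  define e where "e = mob (Y0, -X0, -V, U) c2"
  have c2e: "mob (U, X0, V, Y0) e = c2" unfolding e_def using mob_adj_right[OF det] .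
  have conj: "hmap h (mob (U, X0, V, Y0) x) = mob (U, X0, V, Y0) (hmap psi x)" for x
    unfolding psi_def using hmap_conj[OF hv det] .
  have inj: "mob (U, X0, V, Y0) x = mob (U, X0, V, Y0) y \<Longrightarrow> x = y" for x y
    using mob_adj_left[OF det, of x] mob_adj_left[OF det, of y] by metis
  have ce: "hcrit psi e" using c2(1) hcrit_conj[OF det, of h e] c2e unfolding psi_def by simp
  have "mob (U, X0, V, Y0) (hmap psi (hmap psi e)) = mob (U, X0, V, Y0) e"
    using c2(2) c2e conj by metis
  then have pe: "hmap psi (hmap psi e) = e" using inj by blast
  have "mob (U, X0, V, Y0) (hmap psi e) \<noteq> mob (U, X0, V, Y0) e"
    using c2(3) c2e conj by metis
  then have pe2: "hmap psi e \<noteq> e" by auto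
  have m0: "mob (U, X0, V, Y0) (Some 0) = proj X0 Y0" using mob_proj[OF det, of 0 1] by (simp add: proj_Some)
  have mN: "mob (U, X0, V, Y0) None = proj U V" using mob_proj[OF det, of 1 0] by (simp add: proj_None[symmetric])
  have e0: "e \<noteq> Some 0" using ne m0 c2e by auto
  show ?thesis
  proof (cases e)
    case None
    then show ?thesis using mN c2e m1 by simp
  next
    case (Some y)
    have y0: "y \<noteq> 0" using e0 Some by simp
    have W: "hW psi y 1 = 0" using ce Some by (simp add: hcrit_def)
    have "hW psi y 1 = - (y * (f1 * g2 * y + 2 * f0 * g2))" unfolding psi by (simp add: hW_def algebra_simps power2_eq_square)
    then have W': "y * (f1 * g2 * y + 2 * f0 * g2) = 0" using W by simp
    show ?thesis
    proof (cases "f1 = 0")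
      case True
      then show ?thesis using W' y0 f0 g2 by simp
    next
      case False
      have "f1 * g2 * y + 2 * f0 * g2 = 0" using W' y0 by simp
      then have "g2 * (f1 * y + 2 * f0) = 0" by (simp add: algebra_simps)
      then have "f1 * y + 2 * f0 = 0" using g2 by simp
      then have fy: "f1 * y = - 2 * f0" by (simp add: algebra_simps add_eq_0_iff)
      define w where "w = (f1 * y + f0) / (g2 * y^2)"
      have hy: "hmap psi (Some y) = Some w" unfolding psi w_def using g2 y0
        by (simp add: hmap_def proj_def hF_def hG_def)
      have wnz: "w \<noteq> 0" unfolding w_def using fy f0 g2 y0 by simp
      have w2: "g2 * y^2 * w = - f0" unfolding w_def using fy g2 y0 by simp
      have hw: "hmap psi (Some w) = Some ((f1 * w + f0) / (g2 * w^2))" unfolding psi using g2 wnz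
        by (simp add: hmap_def proj_def hF_def hG_def)
      have yy: "(f1 * w + f0) / (g2 * w^2) = y" using pe hy hw Some by simp
      have wy: "w \<noteq> y" using pe2 hy Some by auto
      have eq1: "f1 * w + f0 = y * g2 * w^2" using yy g2 wnz by (simp add: field_simps)
      have "f0 * (y - w) = y * (f1 * w + f0) + 2 * f0 * w - f0 * w - (f1 * y + 2 * f0) * w"
        by (simp add: algebra_simps)
      also have "\<dots> = y * (y * g2 * w^2) + f0 * w" using eq1 fy by (simp add: algebra_simps)
      also have "\<dots> = w * (g2 * y^2 * w + f0)" by (simp add: algebra_simps power2_eq_square)
      also have "\<dots> = 0" using w2 by simp
      finally show ?thesis using f0 wy by simp
    qed
  qed
qed


lemma aut_construct:
  assumes hv: "hvalid h" and det: "a * d - b * c \<noteq> 0"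
    and nf: "hf2 (hconj a b c d h) = 0" "hf1 (hconj a b c d h) = 0"
            "hg1 (hconj a b c d h) = 0" "hg0 (hconj a b c d h) = 0"
    and om: "\<omega>^2 + \<omega> + 1 = 0"
  shows "(a*d*\<omega> - b*c) * (a*d - b*c*\<omega>) - (a*b*(1-\<omega>)) * (c*d*(\<omega>-1)) \<noteq> 0"
    "\<forall>x. hmap h (mob (a*d*\<omega> - b*c, a*b*(1-\<omega>), c*d*(\<omega>-1), a*d - b*c*\<omega>) x)
         = mob (a*d*\<omega> - b*c, a*b*(1-\<omega>), c*d*(\<omega>-1), a*d - b*c*\<omega>) (hmap h x)"
    "\<exists>x. mob (a*d*\<omega> - b*c, a*b*(1-\<omega>), c*d*(\<omega>-1), a*d - b*c*\<omega>) x \<noteq> x"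
proof -
  have o0: "\<omega> \<noteq> 0" using om by auto
  have o3: "\<omega>^3 = 1"
  proof -
    have "\<omega>^3 - 1 = (\<omega> - 1) * (\<omega>^2 + \<omega> + 1)" by (simp add: algebra_simps power2_eq_square power3_eq_cube)
    then show ?thesis using om by simp
  qed
  have o1: "\<omega> \<noteq> 1" using om by auto
  let ?t = "(a*d*\<omega> - b*c, a*b*(1-\<omega>), c*d*(\<omega>-1), a*d - b*c*\<omega>)"
  have dt: "(a*d*\<omega> - b*c) * (a*d - b*c*\<omega>) - (a*b*(1-\<omega>)) * (c*d*(\<omega>-1)) = \<omega> * (a * d - b * c)^2"
    by (simp add: algebra_simps power2_eq_square)
  then show "(a*d*\<omega> - b*c) * (a*d - b*c*\<omega>) - (a*b*(1-\<omega>)) * (c*d*(\<omega>-1)) \<noteq> 0" using o0 det by simp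
  have dD: "\<omega> * 1 - 0 * 0 \<noteq> 0" using o0 by simp
  have dA: "d * a - (-b) * (-c) \<noteq> 0" using det by (simp add: algebra_simps)
  have dDA: "(\<omega>*d + 0*(-c)) * (0*(-b) + 1*a) - (\<omega>*(-b) + 0*a) * (0*d + 1*(-c)) \<noteq> 0"
    using det o0 by (simp add: algebra_simps)
  have tau: "mob ?t x = mob (a, b, c, d) (mob (\<omega>, 0, 0, 1) (mob (d, -b, -c, a) x))" for x
  proof -
    have "mob (a, b, c, d) (mob (\<omega>, 0, 0, 1) (mob (d, -b, -c, a) x))
        = mob (a, b, c, d) (mob (\<omega>*d + 0*(-c), \<omega>*(-b) + 0*a, 0*d + 1*(-c), 0*(-b) + 1*a) x)"
      using mob_comp[OF dD dA] by simp
    also have "\<dots> = mob (a*(\<omega>*d + 0*(-c)) + b*(0*d + 1*(-c)), a*(\<omega>*(-b) + 0*a) + b*(0*(-b) + 1*a),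
                         c*(\<omega>*d + 0*(-c)) + d*(0*d + 1*(-c)), c*(\<omega>*(-b) + 0*a) + d*(0*(-b) + 1*a)) x"
      using mob_comp[OF det dDA] by simp
    also have "\<dots> = mob ?t x" by (rule arg_cong2[where f=mob]) (simp_all add: algebra_simps)
    finally show ?thesis by simp
  qed
  define psi where "psi = hconj a b c d h"
  have psi: "psi = HM 0 0 (hf0 psi) (hg2 psi) 0 0" using nf unfolding psi_def by (metis hm.collapse)
  have cD: "hconj \<omega> 0 0 1 psi = psi"
    apply (subst (2) psi, subst psi)
    using o3 by (simp add: hconj_def power2_eq_square power3_eq_cube algebra_simps)
  have pv: "hvalid psi" unfolding psi_def using hvalid_conj[OF hv det] .
  have comD: "hmap psi (mob (\<omega>, 0, 0, 1) y) = mob (\<omega>, 0, 0, 1) (hmap psi y)" for y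
    using hmap_conj[OF pv dD, of y] cD by simp
  have comM: "hmap h (mob (a, b, c, d) y) = mob (a, b, c, d) (hmap psi y)" for y
    unfolding psi_def using hmap_conj[OF hv det] .
  show "\<forall>x. hmap h (mob ?t x) = mob ?t (hmap h x)"
  proof
    fix x
    define y where "y = mob (d, -b, -c, a) x"
    have xy: "x = mob (a, b, c, d) y" unfolding y_def using mob_adj_right[OF det] by simp
    have "hmap h (mob ?t x) = hmap h (mob (a, b, c, d) (mob (\<omega>, 0, 0, 1) y))" unfolding tau y_def ..
    also have "\<dots> = mob (a, b, c, d) (mob (\<omega>, 0, 0, 1) (hmap psi y))" using comM comD by simp
    also have "\<dots> = mob ?t (hmap h x)"
      unfolding tau xy comM mob_adj_left[OF det] ..
    finally show "hmap h (mob ?t x) = mob ?t (hmap h x)" .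
  qed
  show "\<exists>x. mob ?t x \<noteq> x"
  proof
    let ?x = "mob (a, b, c, d) (Some 1)"
    show "mob ?t ?x \<noteq> ?x"
    proof
      assume "mob ?t ?x = ?x"
      then have "mob (a, b, c, d) (mob (\<omega>, 0, 0, 1) (Some 1)) = mob (a, b, c, d) (Some 1)"
        unfolding tau mob_adj_left[OF det] .
      then have "mob (\<omega>, 0, 0, 1) (Some 1) = Some 1"
        using mob_adj_left[OF det] by metis
      then show False using o1 by (simp add: mob_def)
    qed
  qed
qed



definition QZ :: "complex \<Rightarrow> complex \<Rightarrow> complex \<Rightarrow> complex \<Rightarrow> bool" where
  "QZ z z' u u' \<longleftrightarrow> (\<exists>\<alpha> \<beta>. \<alpha> \<in> \<rat> \<and> \<beta> \<in> \<rat> \<and> u = \<alpha> + \<beta> * z \<and> u' = \<alpha> + \<beta> * z')"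

lemma QZ_const: "r \<in> \<rat> \<Longrightarrow> QZ z z' r r"
  unfolding QZ_def by (rule exI[of _ r], rule exI[of _ 0]) simp
lemma QZ_z: "QZ z z' z z'"
  unfolding QZ_def by (rule exI[of _ 0], rule exI[of _ 1]) simp
lemma QZ_add: "QZ z z' u u' \<Longrightarrow> QZ z z' v v' \<Longrightarrow> QZ z z' (u + v) (u' + v')"
  unfolding QZ_def
  by (elim exE conjE, rename_tac a b c d, rule_tac x="a + c" in exI, rule_tac x="b + d" in exI)
     (auto simp: algebra_simps)
lemma QZ_neg: "QZ z z' u u' \<Longrightarrow> QZ z z' (- u) (- u')"
  unfolding QZ_def
  by (elim exE conjE, rename_tac a b, rule_tac x="- a" in exI, rule_tac x="- b" in exI)
     (auto simp: algebra_simps)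
lemma QZ_diff: "QZ z z' u u' \<Longrightarrow> QZ z z' v v' \<Longrightarrow> QZ z z' (u - v) (u' - v')"
  using QZ_add[of z z' u u' "-v" "-v'"] QZ_neg[of z z' v v'] by simp
lemma QZ_mult:
  assumes zz: "z + z' = - s" "z * z' = t" "s \<in> \<rat>" "t \<in> \<rat>"
  shows "QZ z z' u u' \<Longrightarrow> QZ z z' v v' \<Longrightarrow> QZ z z' (u * v) (u' * v')"
proof -
  assume "QZ z z' u u'" "QZ z z' v v'"
  then obtain a b c d where abcd: "a \<in> \<rat>" "b \<in> \<rat>" "c \<in> \<rat>" "d \<in> \<rat>"
    "u = a + b * z" "u' = a + b * z'" "v = c + d * z" "v' = c + d * z'"
    unfolding QZ_def by blast
  have "z * z = z * (z + z') - z * z'" "z' * z' = z' * (z + z') - z * z'" by (simp_all add: algebra_simps)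
  then have z2: "z * z = - s * z - t" "z' * z' = - s * z' - t" using zz(1,2) by simp_all
  show ?thesis unfolding QZ_def
  proof (intro exI conjI)
    show "a * c - b * d * t \<in> \<rat>" "a * d + b * c - b * d * s \<in> \<rat>" using abcd zz by auto
    have "u * v = a * c + (a * d + b * c) * z + b * d * (z * z)" unfolding abcd by (simp add: algebra_simps)
    then show "u * v = a * c - b * d * t + (a * d + b * c - b * d * s) * z" unfolding z2 by (simp add: algebra_simps)
    have "u' * v' = a * c + (a * d + b * c) * z' + b * d * (z' * z')" unfolding abcd by (simp add: algebra_simps)
    then show "u' * v' = a * c - b * d * t + (a * d + b * c - b * d * s) * z'" unfolding z2 by (simp add: algebra_simps)
  qed
qed

lemma QZ_sum:
  assumes "z + z' = - s" "s \<in> \<rat>" "QZ z z' u u'"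
  shows "u + u' \<in> \<rat>"
proof -
  obtain a b where ab: "a \<in> \<rat>" "b \<in> \<rat>" "u = a + b * z" "u' = a + b * z'" using assms(3) unfolding QZ_def by blast
  have "u + u' = 2 * a + b * (z + z')" unfolding ab by (simp add: algebra_simps)
  then show ?thesis using ab assms by simp
qed

lemma QZ_prod:
  assumes zz: "z + z' = - s" "z * z' = t" "s \<in> \<rat>" "t \<in> \<rat>" and q: "QZ z z' u u'"
  shows "u * u' \<in> \<rat>"
proof -
  obtain a b where ab: "a \<in> \<rat>" "b \<in> \<rat>" "u = a + b * z" "u' = a + b * z'" using q unfolding QZ_def by blast
  have "u * u' = a * a + a * b * (z + z') + b * b * (z * z')" unfolding ab by (simp add: algebra_simps)
  then show ?thesis using ab zz by simp
qed

lemma QZ_zero: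
  assumes "z \<notin> \<rat>" "z' \<notin> \<rat>" "QZ z z' u u'"
  shows "u = 0 \<longleftrightarrow> u' = 0"
proof -
  obtain a b where ab: "a \<in> \<rat>" "b \<in> \<rat>" "u = a + b * z" "u' = a + b * z'" using assms(3) unfolding QZ_def by blast
  have k: "a + b * w = 0 \<Longrightarrow> w \<notin> \<rat> \<Longrightarrow> a = 0 \<and> b = 0" for w
  proof -
    assume e: "a + b * w = 0" and w: "w \<notin> \<rat>"
    show "a = 0 \<and> b = 0"
    proof (cases "b = 0")
      case True then show ?thesis using e by simp
    next
      case False
      then have "w = - a / b" using e by (simp add: field_simps add_eq_0_iff)
      then have "w \<in> \<rat>" using ab by simp
      then show ?thesis using w by simp
    qed
  qed
  show ?thesis using k[of z] k[of z'] assms ab by auto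
qed

definition hratc :: "complex hm \<Rightarrow> bool" where
  "hratc h \<longleftrightarrow> hf2 h \<in> \<rat> \<and> hf1 h \<in> \<rat> \<and> hf0 h \<in> \<rat> \<and> hg2 h \<in> \<rat> \<and> hg1 h \<in> \<rat> \<and> hg0 h \<in> \<rat>"

lemma QZ_forms:
  assumes zz: "z + z' = - s" "z * z' = t" "s \<in> \<rat>" "t \<in> \<rat>" and r: "hratc h"
    and x: "QZ z z' X X'" and y: "QZ z z' Y Y'"
  shows "QZ z z' (hF h X Y) (hF h X' Y')" "QZ z z' (hG h X Y) (hG h X' Y')" "QZ z z' (hW h X Y) (hW h X' Y')"
proof -
  note M = QZ_mult[OF zz] and C = QZ_const and A = QZ_add and D = QZ_diff
  have cs: "QZ z z' (hf2 h) (hf2 h)" "QZ z z' (hf1 h) (hf1 h)" "QZ z z' (hf0 h) (hf0 h)"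
     "QZ z z' (hg2 h) (hg2 h)" "QZ z z' (hg1 h) (hg1 h)" "QZ z z' (hg0 h) (hg0 h)" "QZ z z' 2 2"
    using r unfolding hratc_def by (auto intro: C)
  show "QZ z z' (hF h X Y) (hF h X' Y')" unfolding hF_def power2_eq_square
    by (intro A M cs x y)
  show "QZ z z' (hG h X Y) (hG h X' Y')" unfolding hG_def power2_eq_square
    by (intro A M cs x y)
  show "QZ z z' (hW h X Y) (hW h X' Y')" unfolding hW_def power2_eq_square
    by (intro A D M cs x y)
qed

lemma nth_default_rat: "set xs \<subseteq> \<rat> \<Longrightarrow> nth_default 0 xs n \<in> (\<rat>::complex set)"
  by (auto simp: nth_default_def)

lemma alg_quartic:
  assumes "A + A' \<in> \<rat>" "A * A' + B + B' \<in> \<rat>" "A * B' + A' * B \<in> \<rat>" "B * B' \<in> \<rat>"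
    and w: "w^2 - A * w + B = 0"
  shows "algebraic w"
proof (rule algebraicI')
  let ?xs = "[B * B', - (A * B' + A' * B), A * A' + B + B', - (A + A'), 1]"
  let ?p = "Poly ?xs"
  have "coeff ?p 4 = 1" by (simp add: numeral_eq_Suc)
  then show "?p \<noteq> 0" by auto
  show "coeff ?p i \<in> \<rat>" for i
  proof -
    have m: "-(A*B'+A'*B) \<in> \<rat>" "-(A+A') \<in> \<rat>" using assms(1,3) Rats_minus_iff by blast+
    have "set ?xs \<subseteq> \<rat>" unfolding set_simps insert_subset using m assms Rats_1 by blast
    then show ?thesis unfolding coeff_Poly_eq nth_default_def by (metis (no_types) Rats_0 nth_mem subsetD)
  qed
  have "poly ?p w = B * B' - (A * B' + A' * B) * w + (A * A' + B + B') * w^2 - (A + A') * w^3 + w^4"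
    by (simp add: algebra_simps power2_eq_square power3_eq_cube numeral_eq_Suc)
  also have "\<dots> = (w^2 - A * w + B) * (w^2 - A' * w + B')"
    by (simp add: algebra_simps power2_eq_square power3_eq_cube numeral_eq_Suc)
  finally show "poly ?p w = 0" using w by simp
qed

lemma alg_uv:
  assumes zz: "z + z' = - s" "z * z' = t" "s \<in> \<rat>" "t \<in> \<rat>"
    and u: "QZ z z' u u'" and v: "QZ z z' v v'" and om: "\<omega>^2 + \<omega> + 1 = 0"
  shows "algebraic (u + \<omega> * v)"
proof -
  note M = QZ_mult[OF zz] and C = QZ_const and A = QZ_add and D = QZ_diff
  define a where "a = 2 * u - v"
  define b where "b = u * u - u * v + v * v"
  define a' where "a' = 2 * u' - v'"
  define b' where "b' = u' * u' - u' * v' + v' * v'"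
  have qa: "QZ z z' a a'" unfolding a_def a'_def by (intro D M C u v) auto
  have qb: "QZ z z' b b'" unfolding b_def b'_def by (intro A D M u v)
  have qab: "QZ z z' (a * b) (a' * b')" by (intro M qa qb)
  have s1: "a + a' \<in> \<rat>" using QZ_sum[OF zz(1,3) qa] .
  have p1: "a * a' \<in> \<rat>" using QZ_prod[OF zz qa] .
  have s2: "b + b' \<in> \<rat>" using QZ_sum[OF zz(1,3) qb] .
  have p2: "b * b' \<in> \<rat>" using QZ_prod[OF zz qb] .
  have s3: "a * b + a' * b' \<in> \<rat>" using QZ_sum[OF zz(1,3) qab] .
  have "a * b' + a' * b = (a + a') * (b + b') - (a * b + a' * b')" by (simp add: algebra_simps)
  then have "a * b' + a' * b \<in> \<rat>" using s1 s2 s3 by simp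
  moreover have "a * a' + b + b' \<in> \<rat>" using p1 s2 by (simp add: add.assoc)
  moreover have "(u + \<omega> * v)^2 - a * (u + \<omega> * v) + b = 0"
  proof -
    have "(u + \<omega> * v)^2 - a * (u + \<omega> * v) + b = v * v * (\<omega>^2 + \<omega> + 1)"
      unfolding a_def b_def by (simp add: algebra_simps power2_eq_square)
    then show ?thesis using om by simp
  qed
  ultimately show ?thesis using alg_quartic s1 p2 by blast
qed

lemma alg_rat_uv:
  assumes "(u::complex) \<in> \<rat>" "v \<in> \<rat>" "\<omega>^2 + \<omega> + 1 = 0"
  shows "algebraic (u + \<omega> * v)"
proof -
  have z: "(0::complex) + 0 = - 0" "(0::complex) * 0 = 0" "(0::complex) \<in> \<rat>" by simp_all
  show ?thesis using alg_uv[OF z(1) z(2) z(3) z(3) QZ_const[OF assms(1)] QZ_const[OF assms(2)] assms(3)] .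
qed



lemma form_zero: "\<exists>X Y. (X, Y) \<noteq> (0,0) \<and> a * X^2 + b * X * Y + c * (Y::complex)^2 = 0"
proof (cases "a = 0")
  case True then show ?thesis by (intro exI[of _ 1] exI[of _ 0]) simp
next
  case False
  then obtain w where "a * w^2 + b * w + c = 0" using quad_root by blast
  then show ?thesis by (intro exI[of _ w] exI[of _ 1]) simp
qed

lemma hW_nonzero:
  assumes hv: "hvalid h"
  shows "\<not> (hf2 h * hg1 h - hf1 h * hg2 h = 0 \<and> hf2 h * hg0 h - hf0 h * hg2 h = 0 \<and> hf1 h * hg0 h - hf0 h * hg1 h = 0)"
proof
  assume W: "hf2 h * hg1 h - hf1 h * hg2 h = 0 \<and> hf2 h * hg0 h - hf0 h * hg2 h = 0 \<and> hf1 h * hg0 h - hf0 h * hg1 h = 0"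
  have rel: "hg2 h * hF h X Y = hf2 h * hG h X Y" "hg1 h * hF h X Y = hf1 h * hG h X Y"
            "hg0 h * hF h X Y = hf0 h * hG h X Y" for X Y
  proof -
    have "hg2 h * hF h X Y - hf2 h * hG h X Y = - (hf2 h * hg1 h - hf1 h * hg2 h) * X * Y - (hf2 h * hg0 h - hf0 h * hg2 h) * Y^2"
      by (simp add: hF_def hG_def algebra_simps)
    then show "hg2 h * hF h X Y = hf2 h * hG h X Y" using W by simp
    have "hg1 h * hF h X Y - hf1 h * hG h X Y = (hf2 h * hg1 h - hf1 h * hg2 h) * X^2 - (hf1 h * hg0 h - hf0 h * hg1 h) * Y^2"
      by (simp add: hF_def hG_def algebra_simps)
    then show "hg1 h * hF h X Y = hf1 h * hG h X Y" using W by simp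
    have "hg0 h * hF h X Y - hf0 h * hG h X Y = (hf2 h * hg0 h - hf0 h * hg2 h) * X^2 + (hf1 h * hg0 h - hf0 h * hg1 h) * X * Y"
      by (simp add: hF_def hG_def algebra_simps)
    then show "hg0 h * hF h X Y = hf0 h * hG h X Y" using W by simp
  qed
  show False
  proof (cases "hg2 h = 0 \<and> hg1 h = 0 \<and> hg0 h = 0")
    case True
    obtain X Y where XY: "(X, Y) \<noteq> (0,0)" "hf2 h * X^2 + hf1 h * X * Y + hf0 h * Y^2 = 0" using form_zero by blast
    then have "hF h X Y = 0" "hG h X Y = 0" using True by (simp_all add: hF_def hG_def)
    then show False using hvalidD[OF hv XY(1)] by simp
  next
    case False
    obtain X Y where XY: "(X, Y) \<noteq> (0,0)" "hg2 h * X^2 + hg1 h * X * Y + hg0 h * Y^2 = 0" using form_zero by blast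
    then have G0: "hG h X Y = 0" by (simp add: hG_def)
    then have "hF h X Y = 0" using rel[of X Y] False by auto
    then show False using G0 hvalidD[OF hv XY(1)] by simp
  qed
qed

definition hr :: "ratmap \<Rightarrow> rat hm" where
  "hr phi = HM (coeff (fst phi) 2) (coeff (fst phi) 1) (coeff (fst phi) 0)
               (coeff (snd phi) 2) (coeff (snd phi) 1) (coeff (snd phi) 0)"

definition hmr :: "rat hm \<Rightarrow> complex hm" where
  "hmr h = HM (of_rat (hf2 h)) (of_rat (hf1 h)) (of_rat (hf0 h)) (of_rat (hg2 h)) (of_rat (hg1 h)) (of_rat (hg0 h))"

lemma hc_hr: "hc phi = hmr (hr phi)" by (simp add: hc_def hr_def hmr_def)

lemma hmr_sel [simp]: "hf2 (hmr h) = of_rat (hf2 h)" "hf1 (hmr h) = of_rat (hf1 h)" "hf0 (hmr h) = of_rat (hf0 h)"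
  "hg2 (hmr h) = of_rat (hg2 h)" "hg1 (hmr h) = of_rat (hg1 h)" "hg0 (hmr h) = of_rat (hg0 h)"
  by (simp_all add: hmr_def)

lemma hF_hmr: "hF (hmr h) (of_rat X) (of_rat Y) = of_rat (hF h X Y)"
  by (simp add: hF_def of_rat_add of_rat_mult of_rat_power)
lemma hG_hmr: "hG (hmr h) (of_rat X) (of_rat Y) = of_rat (hG h X Y)"
  by (simp add: hG_def of_rat_add of_rat_mult of_rat_power)
lemma hconj_hmr: "hconj (of_rat a) (of_rat b) (of_rat c) (of_rat d) (hmr h) = hmr (hconj a b c d h)"
  by (simp add: hconj_def hmr_def Let_def of_rat_add of_rat_mult of_rat_power of_rat_diff)
lemma hsc_hmr: "hsc (of_rat k) (hmr h) = hmr (hsc k h)"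
  by (simp add: hsc_def hmr_def of_rat_mult)
lemma hratc_hmr: "hratc (hmr h)" by (simp add: hratc_def)

lemma no_aut:
  assumes at: "Aut_trivial phi" and v: "rm_valid phi" and dg: "rm_deg phi = 2"
    and det: "a * d - b * c \<noteq> 0"
    and nf: "hf2 (hconj a b c d (hc phi)) = 0" "hf1 (hconj a b c d (hc phi)) = 0"
            "hg1 (hconj a b c d (hc phi)) = 0" "hg0 (hconj a b c d (hc phi)) = 0"
    and om: "\<omega>^2 + \<omega> + 1 = 0"
    and al: "algebraic (a*d*\<omega> - b*c)" "algebraic (a*b*(1-\<omega>))" "algebraic (c*d*(\<omega>-1))" "algebraic (a*d - b*c*\<omega>)"
  shows False
proof -
  note AC = aut_construct[OF hvalid_hc[OF v dg] det nf om]
  let ?t = "(a*d*\<omega> - b*c, a*b*(1-\<omega>), c*d*(\<omega>-1), a*d - b*c*\<omega>)"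
  have RE: "rm_eval phi = hmap (hc phi)" by (rule ext) (rule rm_eval_hmap[OF dg])
  have "in_Aut phi ?t" unfolding in_Aut_def mob_nondeg_def mob_alg_def RE
    using AC(1,2) al by simp
  then show False using at AC(3) unfolding Aut_trivial_def by blast
qed



lemma phi_v_facts:
  assumes "v \<noteq> 0"
  shows "rm_deg (phi_v v) = 2" "hc (phi_v v) = hmr (HM 0 v (-v) 1 0 0)"
  using assms by (simp_all add: rm_deg_def phi_v_def hc_def hmr_def numeral_2_eq_2 of_rat_minus)

lemma caseA:
  assumes v: "rm_valid phi" and dg: "rm_deg phi = 2" and at: "Aut_trivial phi"
    and om: "(\<omega>::complex)^2 + \<omega> + 1 = 0"
    and n0: "(X0, Y0) \<noteq> (0::rat, 0::rat)"
    and cr: "hcrit (hc phi) (proj (of_rat X0) (of_rat Y0))"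
    and p2: "hmap (hc phi) (hmap (hc phi) (proj (of_rat X0) (of_rat Y0))) = proj (of_rat X0) (of_rat Y0)"
    and p1: "hmap (hc phi) (proj (of_rat X0) (of_rat Y0)) \<noteq> proj (of_rat X0) (of_rat Y0)"
  shows "\<exists>v :: rat. v \<noteq> 0 \<and> lin_conj_Q phi (phi_v v)"
proof -
  define h where "h = hc phi"
  define H where "H = hr phi"
  have hH: "h = hmr H" unfolding h_def H_def by (rule hc_hr)
  have hv: "hvalid h" unfolding h_def using hvalid_hc[OF v dg] .
  define Ur where "Ur = hF H X0 Y0"
  define Vr where "Vr = hG H X0 Y0"
  have n0c: "(of_rat X0 :: complex, of_rat Y0 :: complex) \<noteq> (0,0)" using n0 by simp
  have UV: "hF h (of_rat X0) (of_rat Y0) = of_rat Ur" "hG h (of_rat X0) (of_rat Y0) = of_rat Vr"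
    unfolding hH Ur_def Vr_def by (simp_all add: hF_hmr hG_hmr)
  have n1c: "(of_rat Ur :: complex, of_rat Vr :: complex) \<noteq> (0,0)" using hvalidD[OF hv n0c] UV by simp
  have m1: "hmap h (proj (of_rat X0) (of_rat Y0)) = proj (of_rat Ur) (of_rat Vr)"
    using hmap_proj[OF hv n0c] UV by simp
  have m2: "hmap h (proj (of_rat Ur) (of_rat Vr)) = proj (of_rat X0) (of_rat Y0)" using p2 m1 unfolding h_def by simp
  have ne: "proj (of_rat Ur) (of_rat Vr) \<noteq> proj (of_rat X0) (of_rat Y0)" using p1 m1 unfolding h_def by simp
  note NF = normal_form[OF hv n0c n1c m1 m2 ne cr[folded h_def]]
  define psi where "psi = hconj Ur X0 Vr Y0 H"
  have psic: "hconj (of_rat Ur) (of_rat X0) (of_rat Vr) (of_rat Y0) h = hmr psi"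
    unfolding hH psi_def by (rule hconj_hmr)
  have detr: "Ur * Y0 - X0 * Vr \<noteq> 0"
  proof
    assume "Ur * Y0 - X0 * Vr = 0"
    then have "(of_rat (Ur * Y0 - X0 * Vr) :: complex) = 0" by simp
    then show False using NF(1) by (simp add: of_rat_diff of_rat_mult)
  qed
  have f2: "hf2 psi = 0" and g0: "hg0 psi = 0" and g1: "hg1 psi = 0" and f0: "hf0 psi \<noteq> 0" and g2: "hg2 psi \<noteq> 0"
    using NF(2-6) unfolding psic by simp_all
  show ?thesis
  proof (cases "hf1 psi = 0")
    case True
    have detc: "of_rat Ur * of_rat Y0 - of_rat X0 * of_rat Vr \<noteq> (0::complex)" using NF(1) .
    let ?a = "of_rat Ur :: complex" and ?b = "of_rat X0 :: complex" and ?c = "of_rat Vr :: complex" and ?d = "of_rat Y0 :: complex"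
    have r: "?a \<in> \<rat>" "?b \<in> \<rat>" "?c \<in> \<rat>" "?d \<in> \<rat>" by simp_all
    have al1: "algebraic (?a*?d*\<omega> - ?b*?c)"
      using alg_rat_uv[of "- (?b*?c)" "?a*?d" \<omega>] r om by (simp add: algebra_simps)
    have al2: "algebraic (?a*?b*(1-\<omega>))"
      using alg_rat_uv[of "?a*?b" "- (?a*?b)" \<omega>] r om by (simp add: algebra_simps)
    have al3: "algebraic (?c*?d*(\<omega>-1))"
      using alg_rat_uv[of "- (?c*?d)" "?c*?d" \<omega>] r om by (simp add: algebra_simps)
    have al4: "algebraic (?a*?d - ?b*?c*\<omega>)"
      using alg_rat_uv[of "?a*?d" "- (?b*?c)" \<omega>] r om by (simp add: algebra_simps)
    have nf: "hf2 (hconj ?a ?b ?c ?d (hc phi)) = 0" "hf1 (hconj ?a ?b ?c ?d (hc phi)) = 0"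
            "hg1 (hconj ?a ?b ?c ?d (hc phi)) = 0" "hg0 (hconj ?a ?b ?c ?d (hc phi)) = 0"
      using psic f2 True g1 g0 unfolding h_def by simp_all
    show ?thesis using no_aut[OF at v dg detc nf om al1 al2 al3 al4] by simp
  next
    case False
    define f1 where "f1 = hf1 psi"
    define f0' where "f0' = hf0 psi"
    define g2' where "g2' = hg2 psi"
    have psi: "psi = HM 0 f1 f0' g2' 0 0" unfolding f1_def f0'_def g2'_def using f2 g0 g1 by (metis hm.collapse)
    have f1: "f1 \<noteq> 0" using False unfolding f1_def .
    define l where "l = - f0' / f1"
    have l: "l \<noteq> 0" using f0 f1 unfolding l_def f0'_def by simp
    have fl: "f1 * l = - f0'" unfolding l_def using f1 by simp
    define k where "k = l^3 * g2'"
    have k: "k \<noteq> 0" using l g2 unfolding k_def g2'_def by simp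
    define w where "w = f1 * l / k"
    have w: "w \<noteq> 0" using f1 l k unfolding w_def by simp
    have comp: "hconj (Ur * l) X0 (Vr * l) Y0 H = hconj l 0 0 1 psi"
      unfolding psi_def using hconj_comp[where a=Ur and b=X0 and c=Vr and d=Y0 and a'=l and b'=0 and c'=0 and d'=1 and h=H] by simp
    have hl: "hconj l 0 0 1 psi = hsc k (HM 0 w (-w) 1 0 0)"
      unfolding psi hsc_def using k fl unfolding k_def w_def
      by (simp add: hconj_def Let_def power2_eq_square power3_eq_cube field_simps)
    define a where "a = Ur * l"
    define c where "c = Vr * l"
    have det: "a * Y0 - X0 * c \<noteq> 0" unfolding a_def c_def using detr l
      by (metis (no_types, lifting) mult.commute mult.left_commute right_diff_distrib mult_eq_0_iff)
    have detc: "(of_rat a :: complex) * of_rat Y0 - of_rat X0 * of_rat c \<noteq> 0"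
    proof
      assume "(of_rat a :: complex) * of_rat Y0 - of_rat X0 * of_rat c = 0"
      then have "(of_rat (a * Y0 - X0 * c) :: complex) = 0" by (simp add: of_rat_diff of_rat_mult)
      then show False using det by simp
    qed
    have cj: "hconj (of_rat a) (of_rat X0) (of_rat c) (of_rat Y0) h = hsc (of_rat k) (hmr (HM 0 w (-w) 1 0 0))"
      unfolding hH hconj_hmr hsc_hmr a_def c_def comp hl ..
    have RE: "rm_eval phi = hmap h" unfolding h_def by (rule ext) (rule rm_eval_hmap[OF dg])
    have REv: "rm_eval (phi_v w) = hmap (hmr (HM 0 w (-w) 1 0 0))"
      using phi_v_facts[OF w] rm_eval_hmap by (metis ext)
    have kc: "(of_rat k :: complex) \<noteq> 0" using k by simp
    have "\<forall>x. rm_eval phi (mob (of_rat a, of_rat X0, of_rat c, of_rat Y0) x)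
             = mob (of_rat a, of_rat X0, of_rat c, of_rat Y0) (rm_eval (phi_v w) x)"
      unfolding RE REv hmap_conj[OF hv detc] cj hmap_hsc[OF kc] by simp
    then have "lin_conj_Q phi (phi_v w)" unfolding lin_conj_Q_def Let_def using det by blast
    then show ?thesis using w by blast
  qed
qed



lemma caseB:
  assumes v: "rm_valid phi" and dg: "rm_deg phi = 2" and at: "Aut_trivial phi"
    and om: "(\<omega>::complex)^2 + \<omega> + 1 = 0"
    and zq: "z \<notin> \<rat>"
    and cr: "hcrit (hc phi) (Some z)"
    and p2: "hmap (hc phi) (hmap (hc phi) (Some z)) = Some z"
    and p1: "hmap (hc phi) (Some z) \<noteq> Some z"
  shows False
proof -
  define h where "h = hc phi"
  have hv: "hvalid h" unfolding h_def using hvalid_hc[OF v dg] .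
  have hq: "hratc h" unfolding h_def hc_hr by (rule hratc_hmr)
  define W2 where "W2 = hf2 h * hg1 h - hf1 h * hg2 h"
  define W1 where "W1 = hf2 h * hg0 h - hf0 h * hg2 h"
  define W0 where "W0 = hf1 h * hg0 h - hf0 h * hg1 h"
  have Wq: "W2 \<in> \<rat>" "W1 \<in> \<rat>" "W0 \<in> \<rat>" using hq unfolding hratc_def W2_def W1_def W0_def by auto
  have Wz: "W2 * z^2 + 2 * W1 * z + W0 = 0" using cr unfolding h_def[symmetric] hcrit_def W2_def W1_def W0_def
    by (simp add: hW_def)
  have W2nz: "W2 \<noteq> 0"
  proof
    assume W2: "W2 = 0"
    show False
    proof (cases "W1 = 0")
      case True
      then have "W0 = 0" using Wz W2 by simp
      then show False using hW_nonzero[OF hv] W2 True unfolding W2_def W1_def W0_def by simp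
    next
      case False
      have "2 * W1 * z = - W0" using Wz W2 by (simp add: eq_neg_iff_add_eq_0)
      moreover have "z = (2 * W1 * z) / (2 * W1)" using False by simp
      ultimately have "z = - W0 / (2 * W1)" by metis
      then have "z \<in> \<rat>" using Wq by simp
      then show False using zq by simp
    qed
  qed
  define s where "s = 2 * W1 / W2"
  define t where "t = W0 / W2"
  have sq: "s \<in> \<rat>" "t \<in> \<rat>" using Wq unfolding s_def t_def by simp_all
  define z' where "z' = - s - z"
  have zz1: "z + z' = - s" unfolding z'_def by simp
  have "W2 * (z^2 + s * z + t) = W2 * z^2 + 2 * W1 * z + W0"
    unfolding s_def t_def using W2nz by (simp add: distrib_left)
  then have zq0: "z^2 + s * z + t = 0" using Wz W2nz by simp
  have "z * z' = t - (z^2 + s * z + t)" unfolding z'_def by (simp add: algebra_simps power2_eq_square)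
  then have zz2: "z * z' = t" using zq0 by simp
  note zz = zz1 zz2 sq
  have z'q: "z' \<notin> \<rat>"
  proof
    assume "z' \<in> \<rat>"
    then have "- s - z' \<in> \<rat>" using sq by simp
    then show False using zq unfolding z'_def by simp
  qed
  have zne: "z' \<noteq> z"
  proof
    assume "z' = z"
    then have "2 * z = - s" using zz1 by simp
    moreover have "z = (2 * z) / 2" by simp
    ultimately have "z = - s / 2" by metis
    then show False using zq sq by simp
  qed
  have qz: "QZ z z' z z'" by (rule QZ_z)
  have q1: "QZ z z' 1 1" by (rule QZ_const) simp
  note QF = QZ_forms[OF zz hq]
  have "hW h z 1 = 0" using cr unfolding h_def[symmetric] hcrit_def by simp
  then have "hW h z' 1 = 0" using QZ_zero[OF zq z'q QF(3)[OF qz q1]] by simp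
  then have cr': "hcrit h (Some z')" by (simp add: hcrit_def)
  define U where "U = hF h z 1"
  define V where "V = hG h z 1"
  define U' where "U' = hF h z' 1"
  define V' where "V' = hG h z' 1"
  have qU: "QZ z z' U U'" unfolding U_def U'_def by (rule QF(1)[OF qz q1])
  have qV: "QZ z z' V V'" unfolding V_def V'_def by (rule QF(2)[OF qz q1])
  have nUV: "(U, V) \<noteq> (0,0)" unfolding U_def V_def using hvalidD[OF hv, of z 1] by simp
  have nUV': "(U', V') \<noteq> (0,0)" unfolding U'_def V'_def using hvalidD[OF hv, of z' 1] by simp
  have hz: "hmap h (Some z) = proj U V" unfolding U_def V_def by (simp add: hmap_def)
  have hz': "hmap h (Some z') = proj U' V'" unfolding U'_def V'_def by (simp add: hmap_def)
  define A where "A = hF h U V"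
  define B where "B = hG h U V"
  define A' where "A' = hF h U' V'"
  define B' where "B' = hG h U' V'"
  have qA: "QZ z z' A A'" unfolding A_def A'_def by (rule QF(1)[OF qU qV])
  have qB: "QZ z z' B B'" unfolding B_def B'_def by (rule QF(2)[OF qU qV])
  have nAB: "(A, B) \<noteq> (0,0)" unfolding A_def B_def using hvalidD[OF hv nUV] .
  have nAB': "(A', B') \<noteq> (0,0)" unfolding A'_def B'_def using hvalidD[OF hv nUV'] .
  have hUV: "hmap h (proj U V) = proj A B" unfolding A_def B_def using hmap_proj[OF hv nUV] .
  have hUV': "hmap h (proj U' V') = proj A' B'" unfolding A'_def B'_def using hmap_proj[OF hv nUV'] .
  have n01: "(z, 1::complex) \<noteq> (0,0)" "(z', 1::complex) \<noteq> (0,0)" by simp_all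
  have "proj A B = proj z 1" using p2 hz hUV proj_Some unfolding h_def by simp
  then have "A * 1 = z * B" using proj_eq_iff[OF nAB n01(1)] by simp
  then have "A - z * B = 0" by simp
  moreover have "QZ z z' (A - z * B) (A' - z' * B')" by (intro QZ_diff QZ_mult[OF zz] qA qB qz)
  ultimately have "A' - z' * B' = 0" using QZ_zero[OF zq z'q] by blast
  then have "proj A' B' = proj z' 1" using proj_eq_iff[OF nAB' n01(2)] by simp
  then have p2': "hmap h (hmap h (Some z')) = Some z'" using hz' hUV' proj_Some by simp
  have "proj U V \<noteq> proj z 1" using p1 hz proj_Some unfolding h_def by simp
  then have "U * 1 \<noteq> z * V" using proj_eq_iff[OF nUV n01(1)] by simp
  then have "U - z * V \<noteq> 0" by simp
  moreover have "QZ z z' (U - z * V) (U' - z' * V')" by (intro QZ_diff QZ_mult[OF zz] qU qV qz)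
  ultimately have "U' - z' * V' \<noteq> 0" using QZ_zero[OF zq z'q] by blast
  then have "proj U' V' \<noteq> proj z' 1" using proj_eq_iff[OF nUV' n01(2)] by simp
  then have p1': "hmap h (Some z') \<noteq> Some z'" using hz' proj_Some by simp
  have c1: "hcrit h (proj z 1)" "hmap h (hmap h (proj z 1)) = proj z 1" "hmap h (proj z 1) \<noteq> proj z 1"
    using cr p2 p1 unfolding h_def proj_Some by simp_all
  have cyc: "hmap h (Some z) = Some z'"
    using two_crit_cycle[OF hv n01(1) c1 cr' p2' p1'] zne proj_Some by simp
  have m1: "hmap h (proj z 1) = proj z' 1" using cyc proj_Some by simp
  have m2: "hmap h (proj z' 1) = proj z 1" using p2 cyc proj_Some unfolding h_def by simp
  have ne: "proj z' 1 \<noteq> proj z 1" using zne proj_Some by simp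
  note NF = normal_form[OF hv n01(1) n01(2) m1 m2 ne c1(1)]
  have f1: "hf1 (hconj z' z 1 1 h) = 0" using NF(7) cr' proj_Some by simp
  have detc: "z' * 1 - z * 1 \<noteq> 0" using NF(1) .
  have nf: "hf2 (hconj z' z 1 1 (hc phi)) = 0" "hf1 (hconj z' z 1 1 (hc phi)) = 0"
           "hg1 (hconj z' z 1 1 (hc phi)) = 0" "hg0 (hconj z' z 1 1 (hc phi)) = 0"
    using NF(2,3,4) f1 unfolding h_def by simp_all
  have qz': "QZ z z' z' z"
  proof -
    have "QZ z z' (- s - z) (- s - z')" by (intro QZ_diff QZ_neg QZ_const qz sq)
    moreover have "- s - z' = z" using zz1 by (simp add: algebra_simps)
    ultimately show ?thesis unfolding z'_def by simp
  qed
  have qnz: "QZ z z' (- z) (- z')" by (intro QZ_neg qz)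
  have qt: "QZ z z' t t" "QZ z z' (- t) (- t)" by (intro QZ_const QZ_neg sq)+
  have qm1: "QZ z z' (-1) (-1)" "QZ z z' 1 1" by (intro QZ_const QZ_neg; simp)+
  have al1: "algebraic (z' * 1 * \<omega> - z * 1)"
    using alg_uv[OF zz qnz qz' om] by (simp add: algebra_simps)
  have al2: "algebraic (z' * z * (1 - \<omega>))"
    using alg_uv[OF zz qt(1) qt(2) om] zz2 by (simp add: algebra_simps)
  have al3: "algebraic (1 * 1 * (\<omega> - 1))"
    using alg_uv[OF zz qm1(1) qm1(2) om] by (simp add: algebra_simps)
  have al4: "algebraic (z' * 1 - z * 1 * \<omega>)"
    using alg_uv[OF zz qz' qnz om] by (simp add: algebra_simps)
  show False using no_aut[OF at v dg detc nf om al1 al2 al3 al4] .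
qed

theorem lemma2p5:
  fixes phi :: ratmap
  assumes "rm_valid phi"
    and "rm_deg phi = 2"
    and "\<exists>P. alg_pt P \<and> critical_pt phi P \<and> two_periodic phi P"
    and "Aut_trivial phi"
  shows "\<exists>v :: rat. v \<noteq> 0 \<and> lin_conj_Q phi (phi_v v)"
proof -
  note v = assms(1) and dg = assms(2) and at = assms(4)
  obtain P where P: "critical_pt phi P" "two_periodic phi P" using assms(3) by blast
  have RE: "rm_eval phi = hmap (hc phi)" by (rule ext) (rule rm_eval_hmap[OF dg])
  have cr: "hcrit (hc phi) P" using P(1) crit_hcrit[OF v dg] by simp
  have p2: "hmap (hc phi) (hmap (hc phi) P) = P" and p1: "hmap (hc phi) P \<noteq> P"
    using P(2) unfolding two_periodic_def RE by simp_all
  obtain \<omega> :: complex where om: "1 * \<omega>^2 + 1 * \<omega> + 1 = 0" using quad_root[of 1 1 1] by auto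
  then have om: "\<omega>^2 + \<omega> + 1 = 0" by simp
  show ?thesis
  proof (cases "\<exists>X0 Y0 :: rat. (X0, Y0) \<noteq> (0,0) \<and> P = proj (of_rat X0) (of_rat Y0)")
    case True
    then obtain X0 Y0 :: rat where XY: "(X0, Y0) \<noteq> (0,0)" "P = proj (of_rat X0) (of_rat Y0)" by blast
    show ?thesis using caseA[OF v dg at om XY(1)] cr p2 p1 XY(2) by simp
  next
    case False
    have PN: "P \<noteq> None"
    proof
      assume "P = None"
      then have "(1::rat, 0::rat) \<noteq> (0,0) \<and> P = proj (of_rat 1) (of_rat 0)" by (simp add: proj_def)
      then show False using False by blast
    qed
    then obtain z where z: "P = Some z" by auto
    have zq: "z \<notin> \<rat>"
    proof
      assume "z \<in> \<rat>"
      then obtain r where "z = of_rat r" by (auto elim: Rats_cases)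
      then have "(r, 1::rat) \<noteq> (0,0) \<and> P = proj (of_rat r) (of_rat 1)" using z by (simp add: proj_def)
      then show False using False by blast
    qed
    show ?thesis using caseB[OF v dg at om zq] cr p2 p1 z by simp
  qed
qed

end
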